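(* In the setting described in the context, if $\omega\in\mathbb{R}$ is an energy eigenvalue, then $$\omega=-\frac{ka+eQ\rho}{a^2+\rho^2}.$$
   Context: Fix real numbers $M>0$, $a$, $Q$ with $M^2=a^2+Q^2$ (extreme Kerr–Newman black hole of mass $M$, Kerr parameter $a$, charge $Q$) and put $\rho:=M$. Fix the rest mass $m>0$ and charge $e\in\mathbb{R}$ of a Dirac particle and a half-integer $k\in\{\pm\frac12,\pm\frac32,\dots\}$ (azimuthal quantum number). For $\omega,\lambda\in\mathbb{R}$ consider the radial system for $f=(f_1,f_2):(\rho,\infty)\to\mathbb{C}^2$, $$\begin{pmatrix}(r-\rho)\frac{d}{dr}+\frac{iV(r)}{r-\rho} & imr-\lambda\\ -imr-\lambda & (r-\rho)\frac{d}{dr}-\frac{iV(r)}{r-\rho}\end{pmatrix}f(r)=0,\qquad V(r):=\omega(r^2+a^2)+ka+eQr,$$ and the angular system for $g=(g_1,g_2):(0,\pi)\to\mathbb{C}^2$, $$\begin{pmatrix}\frac{d}{d\theta}+\frac{\cot\theta}{2}-W(\theta) & -am\cos\theta+\lambda\\ am\cos\theta+\lambda & -\frac{d}{d\theta}-\frac{\cot\theta}{2}-W(\theta)\end{pmatrix}g(\theta)=0,\qquad W(\theta):=a\omega\sin\theta+\frac{k}{\sin\theta}.$$ A number $\omega\in\mathbb{R}$ is called an energy eigenvalue (of the Dirac equation, for azimuthal quantum number $k$) if there exist $\lambda\in\mathbb{R}$ and nontrivial solutions $f$ of the radial system and $g$ of the angular system with $$\int_\rho^\infty|f(r)|^2\frac{r^2+a^2}{(r-\rho)^2}\,dr<\infty,\qquad\int_0^\pi|g(\theta)|^2\sin\theta\,d\theta<\infty.$$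 *)

theory Defs
  imports "HOL-Analysis.Analysis"
begin

definition half_integer :: "real \<Rightarrow> bool" where
  "half_integer k \<longleftrightarrow> (\<exists>j::int. k = real_of_int j + 1/2)"

definition radV :: "real \<Rightarrow> real \<Rightarrow> real \<Rightarrow> real \<Rightarrow> real \<Rightarrow> real \<Rightarrow> real" where
  "radV a Q e k \<omega> r = \<omega> * (r^2 + a^2) + k * a + e * Q * r"

definition angW :: "real \<Rightarrow> real \<Rightarrow> real \<Rightarrow> real \<Rightarrow> real" where
  "angW a k \<omega> \<theta> = a * \<omega> * sin \<theta> + k / sin \<theta>"

definition radial_solution ::
  "real \<Rightarrow> real \<Rightarrow> real \<Rightarrow> real \<Rightarrow> real \<Rightarrow> real \<Rightarrow> real \<Rightarrow> real \<Rightarrow>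
   (real \<Rightarrow> complex) \<Rightarrow> (real \<Rightarrow> complex) \<Rightarrow> bool" where
  "radial_solution \<rho> a Q m e k \<omega> lam f1 f2 \<longleftrightarrow>
     (\<forall>r>\<rho>. \<exists>d1 d2.
        (f1 has_vector_derivative d1) (at r) \<and> (f2 has_vector_derivative d2) (at r) \<and>
        complex_of_real (r - \<rho>) * d1
          + \<i> * complex_of_real (radV a Q e k \<omega> r / (r - \<rho>)) * f1 r
          + (\<i> * complex_of_real (m * r) - complex_of_real lam) * f2 r = 0 \<and>
        (- \<i> * complex_of_real (m * r) - complex_of_real lam) * f1 r
          + complex_of_real (r - \<rho>) * d2
          - \<i> * complex_of_real (radV a Q e k \<omega> r / (r - \<rho>)) * f2 r = 0)"

definition angular_solution ::
  "real \<Rightarrow> real \<Rightarrow> real \<Rightarrow> real \<Rightarrow> real \<Rightarrow>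
   (real \<Rightarrow> complex) \<Rightarrow> (real \<Rightarrow> complex) \<Rightarrow> bool" where
  "angular_solution a m k \<omega> lam g1 g2 \<longleftrightarrow>
     (\<forall>\<theta>\<in>{0<..<pi}. \<exists>d1 d2.
        (g1 has_vector_derivative d1) (at \<theta>) \<and> (g2 has_vector_derivative d2) (at \<theta>) \<and>
        d1 + complex_of_real (cot \<theta> / 2) * g1 \<theta> - complex_of_real (angW a k \<omega> \<theta>) * g1 \<theta>
          + complex_of_real (- a * m * cos \<theta> + lam) * g2 \<theta> = 0 \<and>
        complex_of_real (a * m * cos \<theta> + lam) * g1 \<theta>
          - d2 - complex_of_real (cot \<theta> / 2) * g2 \<theta> - complex_of_real (angW a k \<omega> \<theta>) * g2 \<theta> = 0)"

definition energy_eigenvalue ::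
  "real \<Rightarrow> real \<Rightarrow> real \<Rightarrow> real \<Rightarrow> real \<Rightarrow> real \<Rightarrow> real \<Rightarrow> bool" where
  "energy_eigenvalue \<rho> a Q m e k \<omega> \<longleftrightarrow>
     (\<exists>lam::real. \<exists>f1 f2 g1 g2.
        radial_solution \<rho> a Q m e k \<omega> lam f1 f2 \<and>
        (\<exists>r>\<rho>. f1 r \<noteq> 0 \<or> f2 r \<noteq> 0) \<and>
        angular_solution a m k \<omega> lam g1 g2 \<and>
        (\<exists>\<theta>\<in>{0<..<pi}. g1 \<theta> \<noteq> 0 \<or> g2 \<theta> \<noteq> 0) \<and>
        set_integrable lborel {\<rho><..}
          (\<lambda>r. ((cmod (f1 r))^2 + (cmod (f2 r))^2) * (r^2 + a^2) / (r - \<rho>)^2) \<and>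
        set_integrable lborel {0<..<pi}
          (\<lambda>\<theta>. ((cmod (g1 \<theta>))^2 + (cmod (g2 \<theta>))^2) * sin \<theta>))"

end

theory Submission
  imports Defs
begin

definition D1 where "D1 \<rho> a Q e k \<omega> m lam (f1::real\<Rightarrow>complex) f2 r =
  - (\<i> * of_real (radV a Q e k \<omega> r / (r - \<rho>)) * f1 r + (\<i> * of_real (m*r) - of_real lam) * f2 r) / of_real (r - \<rho>)"
definition D2 where "D2 \<rho> a Q e k \<omega> m lam (f1::real\<Rightarrow>complex) f2 r =
  ((\<i> * of_real (m*r) + of_real lam) * f1 r + \<i> * of_real (radV a Q e k \<omega> r / (r - \<rho>)) * f2 r) / of_real (r - \<rho>)"

lemma solve1: "(X::complex) \<noteq> 0 \<Longrightarrow> X*d + A + B = 0 \<Longrightarrow> d = - (A + B) / X"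
proof -
  assume "X \<noteq> 0" "X*d + A + B = 0"
  then have "X*d = - (A+B)" by (metis add.assoc eq_neg_iff_add_eq_0)
  then show ?thesis using \<open>X \<noteq> 0\<close> by (simp add: field_simps)
qed
lemma solve2: "(X::complex) \<noteq> 0 \<Longrightarrow> (- \<i> * c - l) * F + X*d - B = 0 \<Longrightarrow> d = ((\<i> * c + l) * F + B) / X"
  by (simp add: field_simps)

lemma rad_deriv:
  assumes "radial_solution \<rho> a Q m e k \<omega> lam f1 f2" "r > \<rho>"
  shows "(f1 has_vector_derivative D1 \<rho> a Q e k \<omega> m lam f1 f2 r) (at r)"
    "(f2 has_vector_derivative D2 \<rho> a Q e k \<omega> m lam f1 f2 r) (at r)"
proof -
  obtain d1 d2 where d: "(f1 has_vector_derivative d1) (at r)" "(f2 has_vector_derivative d2) (at r)"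
    "complex_of_real (r - \<rho>) * d1
          + \<i> * complex_of_real (radV a Q e k \<omega> r / (r - \<rho>)) * f1 r
          + (\<i> * complex_of_real (m * r) - complex_of_real lam) * f2 r = 0"
    "(- \<i> * complex_of_real (m * r) - complex_of_real lam) * f1 r
          + complex_of_real (r - \<rho>) * d2
          - \<i> * complex_of_real (radV a Q e k \<omega> r / (r - \<rho>)) * f2 r = 0"
    using assms unfolding radial_solution_def by blast
  have x: "complex_of_real (r - \<rho>) \<noteq> 0" using assms by simp
  have "d1 = D1 \<rho> a Q e k \<omega> m lam f1 f2 r" using solve1[OF x d(3)] unfolding D1_def by simp
  moreover have "d2 = D2 \<rho> a Q e k \<omega> m lam f1 f2 r" using solve2[OF x d(4)] unfolding D2_def by simp
  ultimately show "(f1 has_vector_derivative D1 \<rho> a Q e k \<omega> m lam f1 f2 r) (at r)"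
    "(f2 has_vector_derivative D2 \<rho> a Q e k \<omega> m lam f1 f2 r) (at r)" using d by auto
qed

lemma u_ident_gen:
  fixes F1 G1 F2 G2 I X V m lam t :: "'a::field"
  assumes "X \<noteq> 0" "I * I = -1"
  shows "F1 * (- (-I * (V / X) * G1 + (-I * (m * t) - lam) * G2) / X)
     + (- (I * (V / X) * F1 + (I * (m * t) - lam) * F2) / X) * G1
     + (F2 * (((-I * (m * t) + lam) * G1 + -I * (V / X) * G2) / X)
     + (((I * (m * t) + lam) * F1 + I * (V / X) * F2) / X) * G2)
   = (2/X) * (lam - I * (m * t)) * (G1 * F2)
     + (2/X) * (lam + I * (m * t)) * (F1 * G2)"
  using assms
  by (simp add: field_simps)

lemma u_ident_gen2:
  fixes F1 G1 F2 G2 I X V m lam t d1 e1 d2 e2 :: "'a::field"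
  assumes "X \<noteq> 0"
   "d1 = - (I * (V / X) * F1 + (I * (m * t) - lam) * F2) / X"
   "e1 = - (-I * (V / X) * G1 + (-I * (m * t) - lam) * G2) / X"
   "d2 = ((I * (m * t) + lam) * F1 + I * (V / X) * F2) / X"
   "e2 = ((-I * (m * t) + lam) * G1 + -I * (V / X) * G2) / X" "I * I = -1"
  shows "F1 * e1 + d1 * G1 + (F2 * e2 + d2 * G2)
   = (2/X) * (lam - I * (m * t)) * (G1 * F2) + (2/X) * (lam + I * (m * t)) * (F1 * G2)"
  unfolding assms(2-5) by (rule u_ident_gen[OF assms(1) assms(6)])

lemma E_ident_gen:
  fixes F1 G1 F2 G2 I X V m lam t :: "'a::field"
  assumes "X \<noteq> 0" "V \<noteq> 0" "I * I = -1"
  defines "A1 \<equiv> -(I*(V/X)*F1 + (I*(m * t) - lam)*F2)/X"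
  defines "B1 \<equiv> -(-I*(V/X)*G1 + (-I*(m * t) - lam)*G2)/X"
  defines "A2 \<equiv> ((I*(m * t)+lam)*F1 + I*(V/X)*F2)/X"
  defines "B2 \<equiv> ((-I*(m * t)+lam)*G1 + -I*(V/X)*G2)/X"
  shows "(F1*B1 + A1*G1 + (F2*B2 + A2*G2) + ((2*X/V)*(I*lam + m * t))*(G1*A2 + B1*F2))
       + (G1*A1 + B1*F1 + (G2*A2 + B2*F2) + ((2*X/V)*(-I*lam + m * t))*(F1*B2 + A1*G2)) = 0"
  using assms(1,2) unfolding A1_def B1_def A2_def B2_def
  apply (simp add: field_simps)
  using assms(3) by algebra

lemma gronwall_back:
  fixes E E' :: "real \<Rightarrow> real"
  assumes "\<alpha> \<le> \<beta>" "\<And>s. s \<in> {\<alpha>..\<beta>} \<Longrightarrow> (E has_real_derivative E' s) (at s)"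
    "\<And>s. s \<in> {\<alpha>..\<beta>} \<Longrightarrow> E' s \<le> K * E s"
  shows "E \<alpha> \<ge> E \<beta> * exp (- K * (\<beta> - \<alpha>))"
proof -
  define h where "h s = E s * exp (- K * s)" for s
  have "h \<alpha> \<ge> h \<beta>"
  proof (rule DERIV_nonpos_imp_nonincreasing[OF assms(1)])
    fix s assume s: "\<alpha> \<le> s" "s \<le> \<beta>"
    have "(h has_real_derivative (E' s * exp (- K * s) + E s * (exp (- K * s) * (- K)))) (at s)"
      unfolding h_def using assms(2) s by (auto intro!: derivative_eq_intros)
    moreover have "E' s * exp (- K * s) + E s * (exp (- K * s) * (- K)) \<le> 0"
    proof -
      have "E' s * exp (- K * s) + E s * (exp (- K * s) * (- K)) = (E' s - K * E s) * exp (- K * s)"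
        by (simp add: algebra_simps)
      also have "\<dots> \<le> 0" using assms(3)[of s] s by (intro mult_nonpos_nonneg) auto
      finally show ?thesis .
    qed
    ultimately show "\<exists>y. (h has_real_derivative y) (at s) \<and> y \<le> 0" by blast
  qed
  then have "E \<beta> * exp (- K * \<beta>) \<le> E \<alpha> * exp (- K * \<alpha>)" unfolding h_def .
  then have "E \<beta> * exp (- K * \<beta>) * exp (K * \<alpha>) \<le> E \<alpha> * exp (- K * \<alpha>) * exp (K * \<alpha>)"
    by (intro mult_right_mono) auto
  moreover have "E \<beta> * exp (- K * \<beta>) * exp (K * \<alpha>) = E \<beta> * exp (- K * (\<beta> - \<alpha>))"
    by (simp add: mult.assoc exp_add[symmetric] algebra_simps)
  moreover have "E \<alpha> * exp (- K * \<alpha>) * exp (K * \<alpha>) = E \<alpha>"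
    by (simp add: mult.assoc exp_add[symmetric])
  ultimately show ?thesis by linarith
qed

definition uu :: "(real \<Rightarrow> complex) \<Rightarrow> (real \<Rightarrow> complex) \<Rightarrow> real \<Rightarrow> real" where
  "uu f1 f2 s = Re (f1 s * cnj (f1 s) + f2 s * cnj (f2 s))"

lemma uu_eq: "uu f1 f2 s = (cmod (f1 s))^2 + (cmod (f2 s))^2"
  unfolding uu_def complex_norm_square[symmetric] by simp

definition Yf where "Yf \<rho> m lam (f1::real\<Rightarrow>complex) f2 s =
  complex_of_real (2/(s-\<rho>)) * (complex_of_real lam - \<i> * complex_of_real (m * s)) * (cnj (f1 s) * f2 s)"

lemma u_deriv:
  assumes "radial_solution \<rho> a Q m e k \<omega> lam f1 f2" "s > \<rho>"
  shows "(uu f1 f2 has_real_derivative Re (Yf \<rho> m lam f1 f2 s + cnj (Yf \<rho> m lam f1 f2 s))) (at s)"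
proof -
  let ?D1 = "D1 \<rho> a Q e k \<omega> m lam f1 f2 s" and ?D2 = "D2 \<rho> a Q e k \<omega> m lam f1 f2 s"
  have h: "((\<lambda>s. f1 s * cnj (f1 s) + f2 s * cnj (f2 s)) has_vector_derivative
     (f1 s * cnj ?D1 + ?D1 * cnj (f1 s) + (f2 s * cnj ?D2 + ?D2 * cnj (f2 s)))) (at s)"
    using rad_deriv[OF assms(1,2)] by (intro derivative_intros) auto
  have x: "complex_of_real (s - \<rho>) \<noteq> 0" using assms(2) by simp
  let ?X = "complex_of_real (s - \<rho>)" and ?V = "complex_of_real (radV a Q e k \<omega> s)"
    and ?m = "complex_of_real m" and ?t = "complex_of_real s" and ?l = "complex_of_real lam"
  have D1e: "?D1 = -(\<i>*(?V/?X)*f1 s + (\<i>*(?m*?t) - ?l)*f2 s)/?X" unfolding D1_def by simp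
  have cD1: "cnj ?D1 = -(-\<i>*(?V/?X)*cnj (f1 s) + (-\<i>*(?m*?t) - ?l)*cnj (f2 s))/?X" unfolding D1_def by simp
  have D2e: "?D2 = ((\<i>*(?m*?t) + ?l)*f1 s + \<i>*(?V/?X)*f2 s)/?X" unfolding D2_def by simp
  have cD2: "cnj ?D2 = ((-\<i>*(?m*?t) + ?l)*cnj (f1 s) + -\<i>*(?V/?X)*cnj (f2 s))/?X" unfolding D2_def by simp
  have Ye: "Yf \<rho> m lam f1 f2 s = (2/?X) * (?l - \<i> * (?m*?t)) * (cnj (f1 s) * f2 s)" unfolding Yf_def by simp
  have cYe: "cnj (Yf \<rho> m lam f1 f2 s) = (2/?X) * (?l + \<i> * (?m*?t)) * (f1 s * cnj (f2 s))" unfolding Yf_def by simp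
  have "f1 s * cnj ?D1 + ?D1 * cnj (f1 s) + (f2 s * cnj ?D2 + ?D2 * cnj (f2 s)) = Yf \<rho> m lam f1 f2 s + cnj (Yf \<rho> m lam f1 f2 s)"
    by (subst cYe, subst Ye, rule u_ident_gen2[OF x D1e cD1 D2e cD2 i_squared])
  then show ?thesis using has_field_derivative_Re[OF h] unfolding uu_def by simp
qed

lemma uu_nonneg: "uu f1 f2 s \<ge> 0" unfolding uu_eq by simp

lemma two_prod_le: "2 * (cmod A * cmod B) \<le> (cmod A)^2 + (cmod B)^2"
proof -
  have "0 \<le> (cmod A - cmod B)^2" by simp
  then show ?thesis by (simp add: power2_eq_square algebra_simps)
qed

lemma u_deriv_bound:
  assumes "s > \<rho>" "m \<ge> 0"
  shows "Re (Yf \<rho> m lam f1 f2 s + cnj (Yf \<rho> m lam f1 f2 s)) \<le> (2*(\<bar>lam\<bar> + \<bar>m * s\<bar>)/(s-\<rho>)) * uu f1 f2 s"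
proof -
  let ?Y = "Yf \<rho> m lam f1 f2 s"
  have s0: "s \<ge> 0 \<or> True" by simp
  have a: "Re (?Y + cnj ?Y) \<le> 2 * cmod ?Y" using complex_Re_le_cmod[of ?Y] by simp
  have b: "cmod ?Y = (2/(s-\<rho>)) * cmod (complex_of_real lam - \<i> * complex_of_real (m * s)) * (cmod (f1 s) * cmod (f2 s))"
    unfolding Yf_def norm_mult complex_mod_cnj norm_of_real using assms by simp
  have c: "cmod (complex_of_real lam - \<i> * complex_of_real (m * s)) \<le> \<bar>lam\<bar> + \<bar>m * s\<bar>"
    using norm_triangle_ineq4[of "complex_of_real lam" "\<i> * complex_of_real (m * s)"]
    by (simp add: norm_mult)
  have d: "(2/(s-\<rho>)) * cmod (complex_of_real lam - \<i> * complex_of_real (m * s)) * (cmod (f1 s) * cmod (f2 s))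
     \<le> (2/(s-\<rho>)) * (\<bar>lam\<bar> + \<bar>m * s\<bar>) * (cmod (f1 s) * cmod (f2 s))"
    using assms c by (intro mult_right_mono mult_left_mono) auto
  have 1: "Re (?Y + cnj ?Y) \<le> 2 * ((2/(s-\<rho>)) * (\<bar>lam\<bar> + \<bar>m * s\<bar>) * (cmod (f1 s) * cmod (f2 s)))"
    using a b d by linarith
  have 2: "2 * ((2/(s-\<rho>)) * (\<bar>lam\<bar> + \<bar>m * s\<bar>) * (cmod (f1 s) * cmod (f2 s)))
     = ((2/(s-\<rho>)) * (\<bar>lam\<bar> + \<bar>m * s\<bar>)) * (2 * (cmod (f1 s) * cmod (f2 s)))" by simp
  have 3: "((2/(s-\<rho>)) * (\<bar>lam\<bar> + \<bar>m * s\<bar>)) * (2 * (cmod (f1 s) * cmod (f2 s))) \<le> ((2/(s-\<rho>)) * (\<bar>lam\<bar> + \<bar>m * s\<bar>)) * uu f1 f2 s"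
    unfolding uu_eq using assms by (intro mult_left_mono two_prod_le) auto
  have 4: "((2/(s-\<rho>)) * (\<bar>lam\<bar> + \<bar>m * s\<bar>)) = (2*(\<bar>lam\<bar> + \<bar>m * s\<bar>)/(s-\<rho>))" by simp
  show ?thesis using 1 2 3 unfolding 4 by linarith
qed

lemma u_pos:
  assumes "radial_solution \<rho> a Q m e k \<omega> lam f1 f2" "m \<ge> 0" "\<rho> < r" "r \<le> r0" "uu f1 f2 r0 > 0" "\<rho> \<ge> 0"
  shows "uu f1 f2 r > 0"
proof -
  define K where "K = 2*(\<bar>lam\<bar> + m * r0)/(r-\<rho>)"
  have "uu f1 f2 r \<ge> uu f1 f2 r0 * exp (- K * (r0 - r))"
  proof (rule gronwall_back[OF assms(4)])
    fix s assume s: "s \<in> {r..r0}"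
    then have sr: "s > \<rho>" using assms by auto
    show "(uu f1 f2 has_real_derivative Re (Yf \<rho> m lam f1 f2 s + cnj (Yf \<rho> m lam f1 f2 s))) (at s)"
      by (rule u_deriv[OF assms(1) sr])
    have "2*(\<bar>lam\<bar> + \<bar>m * s\<bar>)/(s-\<rho>) \<le> K"
      unfolding K_def using s assms
      by (intro frac_le) (auto intro!: mult_left_mono)
    then have "(2*(\<bar>lam\<bar> + \<bar>m * s\<bar>)/(s-\<rho>)) * uu f1 f2 s \<le> K * uu f1 f2 s"
      by (intro mult_right_mono uu_nonneg)
    then show "Re (Yf \<rho> m lam f1 f2 s + cnj (Yf \<rho> m lam f1 f2 s)) \<le> K * uu f1 f2 s"
      using u_deriv_bound[OF sr assms(2), of lam f1 f2] by linarith
  qed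
  moreover have "uu f1 f2 r0 * exp (- K * (r0 - r)) > 0" using assms(5) by simp
  ultimately show ?thesis by linarith
qed

lemma E_ident_gen2:
  fixes F1 G1 F2 G2 I X V m lam t d1 e1 d2 e2 :: "'a::field"
  assumes "X \<noteq> 0" "V \<noteq> 0" "I * I = -1"
   "d1 = -(I*(V/X)*F1 + (I*(m * t) - lam)*F2)/X"
   "e1 = -(-I*(V/X)*G1 + (-I*(m * t) - lam)*G2)/X"
   "d2 = ((I*(m * t)+lam)*F1 + I*(V/X)*F2)/X"
   "e2 = ((-I*(m * t)+lam)*G1 + -I*(V/X)*G2)/X"
  shows "(F1*e1 + d1*G1 + (F2*e2 + d2*G2) + ((2*X/V)*(I*lam + m * t))*(G1*d2 + e1*F2))
       + (G1*d1 + e1*F1 + (G2*d2 + e2*F2) + ((2*X/V)*(-I*lam + m * t))*(F1*e2 + d1*G2)) = 0"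
  unfolding assms(4-7) by (rule E_ident_gen[OF assms(1-3)])

definition qf where "qf \<rho> a Q e k \<omega> s = 2*(s-\<rho>)/radV a Q e k \<omega> s"
definition qd where "qd \<rho> a Q e k \<omega> s =
   2*(radV a Q e k \<omega> s - (s-\<rho>)*(\<omega>*(2 * s) + e*Q))/(radV a Q e k \<omega> s)^2"
definition wf where "wf \<rho> a Q e k \<omega> m lam s =
   complex_of_real (qf \<rho> a Q e k \<omega> s) * (\<i> * complex_of_real lam + complex_of_real (m * s))"
definition wd where "wd \<rho> a Q e k \<omega> m lam s =
   complex_of_real (qf \<rho> a Q e k \<omega> s) * complex_of_real m
   + complex_of_real (qd \<rho> a Q e k \<omega> s) * (\<i> * complex_of_real lam + complex_of_real (m * s))"

lemma qf_deriv:
  assumes "radV a Q e k \<omega> s \<noteq> 0"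
  shows "(qf \<rho> a Q e k \<omega> has_real_derivative qd \<rho> a Q e k \<omega> s) (at s)"
proof -
  have "((\<lambda>s. 2*(s-\<rho>)/radV a Q e k \<omega> s) has_real_derivative qd \<rho> a Q e k \<omega> s) (at s)"
    using assms unfolding radV_def qd_def
    by (auto intro!: derivative_eq_intros simp: power2_eq_square field_simps)
  then show ?thesis unfolding qf_def[abs_def] .
qed

lemma wf_deriv:
  assumes "radV a Q e k \<omega> s \<noteq> 0"
  shows "(wf \<rho> a Q e k \<omega> m lam has_vector_derivative wd \<rho> a Q e k \<omega> m lam s) (at s)"
proof -
  have "((\<lambda>s. complex_of_real (qf \<rho> a Q e k \<omega> s) * (\<i> * complex_of_real lam + complex_of_real (m * s)))
     has_vector_derivative (complex_of_real (qf \<rho> a Q e k \<omega> s) * complex_of_real m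
   + complex_of_real (qd \<rho> a Q e k \<omega> s) * (\<i> * complex_of_real lam + complex_of_real (m * s)))) (at s)"
    apply (rule has_vector_derivative_mult)
     apply (rule has_vector_derivative_of_real[OF qf_deriv[OF assms]])
    apply (rule has_vector_derivative_eq_rhs)
     apply (rule derivative_intros)+
    apply simp
    done
  then show ?thesis unfolding wf_def[abs_def] wd_def .
qed

definition EE where "EE \<rho> a Q e k \<omega> m lam f1 f2 s =
   Re (f1 s * cnj (f1 s) + f2 s * cnj (f2 s) + wf \<rho> a Q e k \<omega> m lam s * (cnj (f1 s) * f2 s))"

lemma E_deriv:
  assumes "radial_solution \<rho> a Q m e k \<omega> lam f1 f2" "s > \<rho>" "radV a Q e k \<omega> s \<noteq> 0"
  shows "(EE \<rho> a Q e k \<omega> m lam f1 f2 has_real_derivative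
           Re (wd \<rho> a Q e k \<omega> m lam s * (cnj (f1 s) * f2 s))) (at s)"
proof -
  let ?D1 = "D1 \<rho> a Q e k \<omega> m lam f1 f2 s" and ?D2 = "D2 \<rho> a Q e k \<omega> m lam f1 f2 s"
  let ?w = "wf \<rho> a Q e k \<omega> m lam s" and ?wd = "wd \<rho> a Q e k \<omega> m lam s"
  let ?T = "f1 s * cnj ?D1 + ?D1 * cnj (f1 s) + (f2 s * cnj ?D2 + ?D2 * cnj (f2 s))
      + ?w * (cnj (f1 s) * ?D2 + cnj ?D1 * f2 s)"
  have h: "((\<lambda>s. f1 s * cnj (f1 s) + f2 s * cnj (f2 s) + wf \<rho> a Q e k \<omega> m lam s * (cnj (f1 s) * f2 s)) has_vector_derivative
     (f1 s * cnj ?D1 + ?D1 * cnj (f1 s) + (f2 s * cnj ?D2 + ?D2 * cnj (f2 s))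
      + (?w * (cnj (f1 s) * ?D2 + cnj ?D1 * f2 s) + ?wd * (cnj (f1 s) * f2 s)))) (at s)"
    using rad_deriv[OF assms(1,2)] wf_deriv[OF assms(3)] by (intro derivative_intros) auto
  have x: "complex_of_real (s - \<rho>) \<noteq> 0" using assms(2) by simp
  have v: "complex_of_real (radV a Q e k \<omega> s) \<noteq> 0" using assms(3) by simp
  let ?X = "complex_of_real (s - \<rho>)" and ?V = "complex_of_real (radV a Q e k \<omega> s)"
    and ?m = "complex_of_real m" and ?t = "complex_of_real s" and ?l = "complex_of_real lam"
  have D1e: "?D1 = -(\<i>*(?V/?X)*f1 s + (\<i>*(?m*?t) - ?l)*f2 s)/?X" unfolding D1_def by simp
  have cD1: "cnj ?D1 = -(-\<i>*(?V/?X)*cnj (f1 s) + (-\<i>*(?m*?t) - ?l)*cnj (f2 s))/?X" unfolding D1_def by simp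
  have D2e: "?D2 = ((\<i>*(?m*?t) + ?l)*f1 s + \<i>*(?V/?X)*f2 s)/?X" unfolding D2_def by simp
  have cD2: "cnj ?D2 = ((-\<i>*(?m*?t) + ?l)*cnj (f1 s) + -\<i>*(?V/?X)*cnj (f2 s))/?X" unfolding D2_def by simp
  have we: "?w = (2*?X/?V)*(\<i>*?l + ?m*?t)" unfolding wf_def qf_def by simp
  have cwe: "cnj ?w = (2*?X/?V)*(-\<i>*?l + ?m*?t)" unfolding wf_def qf_def by simp
  have cT: "cnj ?T = cnj (f1 s) * ?D1 + cnj ?D1 * f1 s + (cnj (f2 s) * ?D2 + cnj ?D2 * f2 s)
      + cnj ?w * (f1 s * cnj ?D2 + ?D1 * cnj (f2 s))" by simp
  have "?T + cnj ?T = 0"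
    unfolding cT
    apply (subst cwe, subst we)
    by (rule E_ident_gen2[OF x v i_squared D1e cD1 D2e cD2])
  then have "Re ?T = 0"
    by (metis complex_cnj_zero_iff complex_add_cnj add_eq_0_iff2 zero_complex.simps(1) of_real_eq_0_iff mult_eq_0_iff zero_neq_numeral)
  then have eq: "Re (?T + ?wd * (cnj (f1 s) * f2 s)) = Re (?wd * (cnj (f1 s) * f2 s))" by simp
  have h2: "((\<lambda>s. f1 s * cnj (f1 s) + f2 s * cnj (f2 s) + wf \<rho> a Q e k \<omega> m lam s * (cnj (f1 s) * f2 s)) has_vector_derivative
     (?T + ?wd * (cnj (f1 s) * f2 s))) (at s)" using h by (simp only: add.assoc)
  show ?thesis unfolding EE_def[abs_def] using has_field_derivative_Re[OF h2] unfolding eq .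
qed

lemma near_rho:
  assumes "radV a Q e k \<omega> \<rho> \<noteq> 0"
  shows "\<exists>\<eta>>0. \<exists>K\<ge>0. \<forall>s. \<rho> < s \<and> s < \<rho> + \<eta> \<longrightarrow>
     radV a Q e k \<omega> s \<noteq> 0 \<and> cmod (wf \<rho> a Q e k \<omega> m lam s) \<le> 1 \<and> cmod (wd \<rho> a Q e k \<omega> m lam s) \<le> K"
proof -
  let ?V = "radV a Q e k \<omega>" and ?w = "wf \<rho> a Q e k \<omega> m lam" and ?wd = "wd \<rho> a Q e k \<omega> m lam"
  have cV: "isCont ?V \<rho>" unfolding radV_def[abs_def] by (intro continuous_intros)
  have cw: "isCont ?w \<rho>" unfolding wf_def[abs_def] qf_def
    using assms by (intro continuous_intros) (auto simp: radV_def[abs_def] intro!: continuous_intros)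
  have cwd: "isCont ?wd \<rho>" unfolding wd_def[abs_def] qf_def qd_def
    using assms by (intro continuous_intros) (auto simp: radV_def[abs_def] intro!: continuous_intros)
  have w0: "?w \<rho> = 0" unfolding wf_def qf_def by simp
  have e1: "\<forall>\<^sub>F s in at \<rho>. dist (?V s) (?V \<rho>) < \<bar>?V \<rho>\<bar>"
    using cV[unfolded isCont_def] assms by (auto simp: tendsto_iff)
  have e2: "\<forall>\<^sub>F s in at \<rho>. dist (?w s) (?w \<rho>) < 1"
    using cw[unfolded isCont_def] by (auto simp: tendsto_iff)
  have e3: "\<forall>\<^sub>F s in at \<rho>. dist (?wd s) (?wd \<rho>) < 1"
    using cwd[unfolded isCont_def] by (auto simp: tendsto_iff)
  have "\<forall>\<^sub>F s in at \<rho>. ?V s \<noteq> 0 \<and> cmod (?w s) \<le> 1 \<and> cmod (?wd s) \<le> cmod (?wd \<rho>) + 1"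
  proof (rule eventually_mono[OF eventually_conj[OF e1 eventually_conj[OF e2 e3]]])
    fix s assume h: "dist (?V s) (?V \<rho>) < \<bar>?V \<rho>\<bar> \<and> dist (?w s) (?w \<rho>) < 1 \<and> dist (?wd s) (?wd \<rho>) < 1"
    have "?V s \<noteq> 0" using h by (auto simp: dist_real_def)
    moreover have "cmod (?w s) \<le> 1" using h w0 by (simp add: dist_norm)
    moreover have "cmod (?wd s) \<le> cmod (?wd \<rho>) + 1"
      using h norm_triangle_ineq2[of "?wd s" "?wd \<rho>"] by (simp add: dist_norm)
    ultimately show "?V s \<noteq> 0 \<and> cmod (?w s) \<le> 1 \<and> cmod (?wd s) \<le> cmod (?wd \<rho>) + 1" by blast
  qed
  then obtain d where d: "d > 0" "\<And>s. s \<noteq> \<rho> \<Longrightarrow> dist s \<rho> < d \<Longrightarrow>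
      ?V s \<noteq> 0 \<and> cmod (?w s) \<le> 1 \<and> cmod (?wd s) \<le> cmod (?wd \<rho>) + 1"
    unfolding eventually_at by auto
  show ?thesis
    apply (rule exI[of _ d], intro conjI d(1))
    apply (rule exI[of _ "cmod (?wd \<rho>) + 1"], intro conjI allI impI)
    using d(2) by (auto simp: dist_real_def)
qed

lemma lower_bound:
  assumes "radial_solution \<rho> a Q m e k \<omega> lam f1 f2" "\<rho> > 0" "m \<ge> 0" "r0 > \<rho>"
    "uu f1 f2 r0 > 0" "radV a Q e k \<omega> \<rho> \<noteq> 0"
  shows "\<exists>\<delta>>0. \<exists>r1>\<rho>. \<forall>s. \<rho> < s \<and> s \<le> r1 \<longrightarrow> uu f1 f2 s \<ge> \<delta>"
proof -
  obtain \<eta> K where \<eta>: "\<eta> > 0" "K \<ge> 0" and nb: "\<And>s. \<rho> < s \<Longrightarrow> s < \<rho> + \<eta> \<Longrightarrow>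
     radV a Q e k \<omega> s \<noteq> 0 \<and> cmod (wf \<rho> a Q e k \<omega> m lam s) \<le> 1 \<and> cmod (wd \<rho> a Q e k \<omega> m lam s) \<le> K"
    using near_rho[OF assms(6), of m lam] by blast
  let ?E = "EE \<rho> a Q e k \<omega> m lam f1 f2" and ?u = "uu f1 f2"
  define r1 where "r1 = min r0 (\<rho> + \<eta>/2)"
  have r1: "\<rho> < r1" "r1 \<le> r0" "r1 < \<rho> + \<eta>" unfolding r1_def using assms \<eta> by auto
  have zb: "2 * cmod (cnj (f1 s) * f2 s) \<le> ?u s" for s
    unfolding uu_eq norm_mult complex_mod_cnj using two_prod_le[of "f1 s" "f2 s"] .
  have Eu: "?E s = ?u s + Re (wf \<rho> a Q e k \<omega> m lam s * (cnj (f1 s) * f2 s))" for s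
    unfolding EE_def uu_def by simp
  have Ebounds: "?u s / 2 \<le> ?E s \<and> ?E s \<le> 3 * ?u s / 2" if "\<rho> < s" "s < \<rho> + \<eta>" for s
  proof -
    let ?w = "wf \<rho> a Q e k \<omega> m lam s" and ?z = "cnj (f1 s) * f2 s"
    have "\<bar>Re (?w * ?z)\<bar> \<le> cmod (?w * ?z)" by (rule abs_Re_le_cmod)
    also have "\<dots> = cmod ?w * cmod ?z" by (simp add: norm_mult)
    also have "\<dots> \<le> 1 * cmod ?z" using nb[OF that] by (intro mult_right_mono) auto
    finally have "\<bar>Re (?w * ?z)\<bar> \<le> ?u s / 2" using zb[of s] by simp
    then show ?thesis unfolding Eu using abs_le_D1 abs_le_D2 by linarith
  qed
  have ur1: "?u r1 > 0" using u_pos[OF assms(1,3) r1(1,2) assms(5)] assms(2) by simp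
  have Er1: "?E r1 > 0" using Ebounds[OF r1(1,3)] ur1 by auto
  define \<delta> where "\<delta> = (2/3) * (?E r1 * exp (- K * \<eta>))"
  have \<delta>: "\<delta> > 0" unfolding \<delta>_def using Er1 by simp
  have "\<forall>s. \<rho> < s \<and> s \<le> r1 \<longrightarrow> ?u s \<ge> \<delta>"
  proof (intro allI impI)
    fix s assume s: "\<rho> < s \<and> s \<le> r1"
    have "?E s \<ge> ?E r1 * exp (- K * (r1 - s))"
    proof (rule gronwall_back)
      show "s \<le> r1" using s by simp
      fix t assume t: "t \<in> {s..r1}"
      then have t1: "\<rho> < t" "t < \<rho> + \<eta>" using s r1 by auto
      show "(?E has_real_derivative Re (wd \<rho> a Q e k \<omega> m lam t * (cnj (f1 t) * f2 t))) (at t)"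
        using E_deriv[OF assms(1) t1(1)] nb[OF t1] by blast
      have "Re (wd \<rho> a Q e k \<omega> m lam t * (cnj (f1 t) * f2 t)) \<le> cmod (wd \<rho> a Q e k \<omega> m lam t * (cnj (f1 t) * f2 t))"
        by (rule complex_Re_le_cmod)
      also have "\<dots> = cmod (wd \<rho> a Q e k \<omega> m lam t) * cmod (cnj (f1 t) * f2 t)" by (simp add: norm_mult)
      also have "\<dots> \<le> K * cmod (cnj (f1 t) * f2 t)" using nb[OF t1] by (intro mult_right_mono) auto
      also have "\<dots> \<le> K * (?u t / 2)" using zb[of t] \<eta> by (intro mult_left_mono) auto
      also have "\<dots> \<le> K * ?E t" using Ebounds[OF t1] \<eta> by (intro mult_left_mono) auto
      finally show "Re (wd \<rho> a Q e k \<omega> m lam t * (cnj (f1 t) * f2 t)) \<le> K * ?E t" .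
    qed
    moreover have "exp (- K * \<eta>) \<le> exp (- K * (r1 - s))" using s r1 \<eta> by (auto intro!: mult_left_mono)
    then have "?E r1 * exp (- K * \<eta>) \<le> ?E r1 * exp (- K * (r1 - s))" using Er1 by (intro mult_left_mono) auto
    moreover have "?E s \<le> 3 * ?u s / 2" using Ebounds[of s] s r1 by auto
    ultimately show "?u s \<ge> \<delta>" unfolding \<delta>_def by linarith
  qed
  then show ?thesis using \<delta> r1(1) by blast
qed

lemma diverge:
  fixes U :: "real \<Rightarrow> real"
  assumes "\<rho> > 0" "\<delta> > 0" "r1 > \<rho>" "\<And>s. \<rho> < s \<Longrightarrow> s \<le> r1 \<Longrightarrow> U s \<ge> \<delta>"
    "set_integrable lborel {\<rho><..} (\<lambda>r. U r * (r^2 + a^2) / (r - \<rho>)^2)"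
  shows False
proof -
  let ?g = "\<lambda>r. U r * (r^2 + a^2) / (r - \<rho>)^2"
  define c where "c = \<delta> * \<rho>^2"
  have c: "c > 0" unfolding c_def using assms by simp
  have "integrable lborel (\<lambda>x. indicator {\<rho><..} x *\<^sub>R ?g x)"
    using assms(5) unfolding set_integrable_def .
  then have fin: "(\<integral>\<^sup>+x. ennreal (norm (indicator {\<rho><..} x *\<^sub>R ?g x)) \<partial>lborel) < \<infinity>"
    unfolding integrable_iff_bounded by blast
  then obtain B where B: "(\<integral>\<^sup>+x. ennreal (norm (indicator {\<rho><..} x *\<^sub>R ?g x)) \<partial>lborel) = ennreal B" "B \<ge> 0"
    by (cases "(\<integral>\<^sup>+x. ennreal (norm (indicator {\<rho><..} x *\<^sub>R ?g x)) \<partial>lborel)") auto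
  have key: "c / \<epsilon> - c / (r1 - \<rho>) \<le> B" if \<epsilon>: "0 < \<epsilon>" "\<epsilon> < r1 - \<rho>" for \<epsilon>
  proof -
    have "(\<integral>\<^sup>+x. ennreal (c / (x - \<rho>)^2) * indicator {\<rho>+\<epsilon> .. r1} x \<partial>lborel)
        = ennreal ((\<lambda>x. - c / (x - \<rho>)) r1 - (\<lambda>x. - c / (x - \<rho>)) (\<rho>+\<epsilon>))"
    proof (rule nn_integral_FTC_Icc)
      show "(\<lambda>x. c / (x - \<rho>)^2) \<in> borel_measurable borel" by measurable
      fix x assume x: "x \<in> {\<rho>+\<epsilon> .. r1}"
      then have "x - \<rho> \<noteq> 0" using \<epsilon> by auto
      then show "((\<lambda>x. - c / (x - \<rho>)) has_real_derivative c / (x - \<rho>)^2) (at x)"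
        by (auto intro!: derivative_eq_intros simp: power2_eq_square field_simps)
      show "0 \<le> c / (x - \<rho>)^2" using c by simp
    next
      show "\<rho> + \<epsilon> \<le> r1" using \<epsilon> by simp
    qed
    also have "\<dots> = ennreal (c / \<epsilon> - c / (r1 - \<rho>))" by simp
    finally have eq: "(\<integral>\<^sup>+x. ennreal (c / (x - \<rho>)^2) * indicator {\<rho>+\<epsilon> .. r1} x \<partial>lborel)
        = ennreal (c / \<epsilon> - c / (r1 - \<rho>))" .
    have "(\<integral>\<^sup>+x. ennreal (c / (x - \<rho>)^2) * indicator {\<rho>+\<epsilon> .. r1} x \<partial>lborel)
        \<le> (\<integral>\<^sup>+x. ennreal (norm (indicator {\<rho><..} x *\<^sub>R ?g x)) \<partial>lborel)"
    proof (rule nn_integral_mono)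
      fix x
      show "ennreal (c / (x - \<rho>)^2) * indicator {\<rho>+\<epsilon> .. r1} x \<le> ennreal (norm (indicator {\<rho><..} x *\<^sub>R ?g x))"
      proof (cases "x \<in> {\<rho>+\<epsilon> .. r1}")
        case True
        then have x: "\<rho> < x" "x \<le> r1" using \<epsilon> by auto
        have p: "(x - \<rho>)^2 > 0" using x by simp
        have "\<delta> * \<rho>^2 \<le> U x * (x^2 + a^2)"
        proof (rule mult_mono)
          show "\<delta> \<le> U x" using assms(4) x by simp
          show "\<rho>^2 \<le> x^2 + a^2" using x assms(1)
            by (smt (verit) power_mono zero_le_power2)
        qed (use assms x in \<open>auto intro: order_trans[OF less_imp_le[OF assms(2)]]\<close>)
        then have "c / (x - \<rho>)^2 \<le> ?g x" unfolding c_def using p by (simp add: divide_right_mono)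
        also have "\<dots> \<le> norm (indicator {\<rho><..} x *\<^sub>R ?g x)" using x by (simp add: divide_right_mono)
        finally show ?thesis using True by (simp add: ennreal_leI)
      qed simp
    qed
    then have "ennreal (c / \<epsilon> - c / (r1 - \<rho>)) \<le> ennreal B" unfolding eq B(1) .
    then show ?thesis using B(2) by simp
  qed
  define \<epsilon> where "\<epsilon> = min ((r1 - \<rho>)/2) (c / (B + c / (r1 - \<rho>) + 1))"
  have "c / (r1 - \<rho>) > 0" using c assms(3) by simp
  then have pos: "B + c / (r1 - \<rho>) + 1 > 0" using B(2) by linarith
  have \<epsilon>: "0 < \<epsilon>" "\<epsilon> < r1 - \<rho>" unfolding \<epsilon>_def using c pos assms(3) by (auto simp: min_less_iff_disj)
  have "\<epsilon> \<le> c / (B + c / (r1 - \<rho>) + 1)" unfolding \<epsilon>_def by simp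
  then have "\<epsilon> * (B + c / (r1 - \<rho>) + 1) \<le> c" using pos by (simp add: le_divide_eq)
  then have "B + c / (r1 - \<rho>) + 1 \<le> c / \<epsilon>" using \<epsilon>(1) by (simp add: le_divide_eq mult.commute)
  then show False using key[OF \<epsilon>] by linarith
qed

theorem mainTheorem4:
  fixes M a Q m e k \<omega> :: real
  assumes "M > 0" and "M^2 = a^2 + Q^2"
    and "m > 0" and "half_integer k"
    and "energy_eigenvalue M a Q m e k \<omega>"
  shows "\<omega> = - (k * a + e * Q * M) / (a^2 + M^2)"
proof -
  obtain lam f1 f2 r0 where rs: "radial_solution M a Q m e k \<omega> lam f1 f2"
    and r0: "r0 > M" "f1 r0 \<noteq> 0 \<or> f2 r0 \<noteq> 0"
    and int: "set_integrable lborel {M<..}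
          (\<lambda>r. ((cmod (f1 r))^2 + (cmod (f2 r))^2) * (r^2 + a^2) / (r - M)^2)"
    using assms(5) unfolding energy_eigenvalue_def by blast
  have V0: "radV a Q e k \<omega> M = 0"
  proof (rule ccontr)
    assume V: "radV a Q e k \<omega> M \<noteq> 0"
    have u0: "uu f1 f2 r0 > 0" using r0(2) unfolding uu_eq
      by (auto simp: add_pos_nonneg add_nonneg_pos)
    obtain \<delta> r1 where d: "\<delta> > 0" "r1 > M" "\<And>s. M < s \<Longrightarrow> s \<le> r1 \<Longrightarrow> uu f1 f2 s \<ge> \<delta>"
      using lower_bound[OF rs assms(1) less_imp_le[OF assms(3)] r0(1) u0 V] by blast
    show False
      by (rule diverge[OF assms(1) d(1) d(2), of "\<lambda>r. (cmod (f1 r))^2 + (cmod (f2 r))^2" a])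
         (use d(3) int in \<open>auto simp: uu_eq\<close>)
  qed
  have pos: "a^2 + M^2 > 0" using assms(1) by (simp add: add_nonneg_pos)
  from V0 have "\<omega> * (M^2 + a^2) = - (k * a + e * Q * M)" unfolding radV_def by linarith
  then have "\<omega> * (a^2 + M^2) = - (k * a + e * Q * M)" by (simp add: add.commute)
  moreover have "\<omega> = (\<omega> * (a^2 + M^2)) / (a^2 + M^2)" using pos by (intro nonzero_mult_div_cancel_right[symmetric]) linarith
  ultimately show ?thesis by metis
qed

end
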